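(* Let $a\in\mathbb Z_{>0}$, $b\in\mathbb Z$ with $a+b\ge1$. Let $z,q\in\mathbb C$, let $\alpha_1,\ldots,\alpha_m$ be words, and let $e_1,\ldots,e_m\in\mathbb Z_{\ge0}$. Then for every positive integer $k$, \[ S(k)=\sum_{n=1}^{k}z^n(an+b)^q\prod_{j=1}^{m}\mathcal H_{\alpha_j}(an+b)^{e_j} \] belongs to $\operatorname{span}_{\mathbb C}\{\mathcal H_\beta(ak+b)\}_\beta$, where $\beta$ ranges over words; i.e. $S(k)$ is a finite linear combination of generalized harmonic numbers with upper limit $ak+b$.
   Context: A letter is a pair $(r,s)\in\mathbb C^2$ and a word is a finite sequence of letters. For a word $\alpha=((r_1,s_1),\ldots,(r_d,s_d))$ and a positive integer $N$, \[ \mathcal H_{\alpha}(N)=\sum_{N\ge n_1>\cdots>n_d\ge1}\prod_{i=1}^{d}\frac{s_i^{n_i}}{n_i^{r_i}},\qquad \mathcal H_\emptyset(N)=1, \] with powers of positive integers defined by $n^r=\exp(r\log n)$ using the real logarithm (so $(an+b)^q$ uses the real logarithm of the positive integer $an+b$). *)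

theory Defs
  imports Complex_Main
begin

type_synonym letter = "complex \<times> complex"
type_synonym word = "letter list"

definition npow :: "nat \<Rightarrow> complex \<Rightarrow> complex" where
  "npow n r = exp (r * complex_of_real (ln (real n)))"

text \<open>Generalized harmonic number H_alpha(N); the sum over N >= n_1 > ... > n_d >= 1
  written recursively in the largest index n_1.\<close>
fun H :: "word \<Rightarrow> nat \<Rightarrow> complex" where
  "H [] N = 1"
| "H ((r, s) # \<alpha>) N = (\<Sum>n\<in>{1..N}. s ^ n / npow n r * H \<alpha> (n - 1))"

end

theory Submission imports Defs begin

definition inspan :: "(nat \<Rightarrow> complex) \<Rightarrow> bool" where
  "inspan f \<longleftrightarrow> (\<exists>cs :: (complex \<times> word) list. \<forall>M. f M = (\<Sum>(c, \<beta>)\<leftarrow>cs. c * H \<beta> M))"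

lemma inspan_H: "inspan (H \<beta>)"
  unfolding inspan_def by (rule exI[of _ "[(1,\<beta>)]"]) simp

lemma inspan_const: "inspan (\<lambda>M. c)"
  unfolding inspan_def by (rule exI[of _ "[(c,[])]"]) simp

lemma inspan_zero: "inspan (\<lambda>M. 0)"
  unfolding inspan_def by (rule exI[of _ "[]"]) simp

lemma inspan_add: assumes "inspan f" "inspan g" shows "inspan (\<lambda>M. f M + g M)"
proof -
  obtain cs1 where 1: "\<forall>M. f M = (\<Sum>(c, \<beta>)\<leftarrow>cs1. c * H \<beta> M)" using assms(1) inspan_def by blast
  obtain cs2 where 2: "\<forall>M. g M = (\<Sum>(c, \<beta>)\<leftarrow>cs2. c * H \<beta> M)" using assms(2) inspan_def by blast
  show ?thesis unfolding inspan_def by (rule exI[of _ "cs1 @ cs2"]) (simp add: 1 2)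
qed

lemma sum_list_scale: "d * (\<Sum>(c, \<beta>)\<leftarrow>cs. c * H \<beta> M) = (\<Sum>(c, \<beta>)\<leftarrow>map (\<lambda>(c,\<beta>). (d*c,\<beta>)) cs. c * H \<beta> M)"
  by (induction cs) (auto simp: algebra_simps)

lemma inspan_scale: assumes "inspan f" shows "inspan (\<lambda>M. d * f M)"
proof -
  obtain cs1 where 1: "\<forall>M. f M = (\<Sum>(c, \<beta>)\<leftarrow>cs1. c * H \<beta> M)" using assms(1) inspan_def by blast
  show ?thesis unfolding inspan_def
    by (rule exI[of _ "map (\<lambda>(c,\<beta>). (d*c,\<beta>)) cs1"]) (simp add: 1 sum_list_scale)
qed

lemma inspan_sum: "(\<And>i. i \<in> I \<Longrightarrow> inspan (f i)) \<Longrightarrow> inspan (\<lambda>M. \<Sum>i\<in>I. f i M)"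
proof (induction I rule: infinite_finite_induct)
  case (infinite A) then show ?case by (simp add: inspan_zero)
next
  case empty then show ?case by (simp add: inspan_zero)
next
  case (insert x F) then show ?case by (simp add: inspan_add)
qed

lemma inspan_eq: "inspan f \<Longrightarrow> (\<And>M. f M = g M) \<Longrightarrow> inspan g"
proof -
  assume "inspan f" "\<And>M. f M = g M"
  then have "f = g" by auto
  then show ?thesis using \<open>inspan f\<close> by simp
qed

lemma inspan_lin_aux:
  assumes "\<And>\<beta>. inspan (\<lambda>M. \<Sum>N\<in>A M. w M N * H \<beta> (u N))"
  shows "inspan (\<lambda>M. \<Sum>N\<in>A M. w M N * (\<Sum>(c, \<beta>)\<leftarrow>cs. c * H \<beta> (u N)))"
proof (induction cs)
  case Nil then show ?case by (simp add: inspan_zero)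
next
  case (Cons x cs)
  obtain c \<beta> where x: "x = (c, \<beta>)" by force
  have "inspan (\<lambda>M. c * (\<Sum>N\<in>A M. w M N * H \<beta> (u N)) + (\<Sum>N\<in>A M. w M N * (\<Sum>(c, \<beta>)\<leftarrow>cs. c * H \<beta> (u N))))"
    by (intro inspan_add inspan_scale assms Cons)
  then show ?case
    by (rule inspan_eq) (simp add: x sum_distrib_left sum.distrib algebra_simps)
qed

lemma inspan_lin:
  assumes "\<And>\<beta>. inspan (\<lambda>M. \<Sum>N\<in>A M. w M N * H \<beta> (u N))" and "inspan f"
  shows "inspan (\<lambda>M. \<Sum>N\<in>A M. w M N * f (u N))"
proof -
  obtain cs1 where 1: "\<forall>M. f M = (\<Sum>(c, \<beta>)\<leftarrow>cs1. c * H \<beta> M)" using assms(2) inspan_def by blast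
  show ?thesis using inspan_lin_aux[where A=A and w=w and u=u and cs=cs1, OF assms(1)] by (simp add: 1)
qed

lemma inspan_shift:
  assumes "inspan f"
  shows "inspan (\<lambda>M. \<Sum>N\<in>{1..M}. s ^ N / npow N r * f (N - 1))"
proof -
  have "inspan (\<lambda>M. \<Sum>N\<in>{1..M}. s ^ N / npow N r * H \<beta> (N - 1))" for \<beta>
    by (rule inspan_eq[OF inspan_H[of "(r,s)#\<beta>"]]) simp
  then show ?thesis using inspan_lin[where A="\<lambda>M. {1..M}" and w="\<lambda>M N. s ^ N / npow N r" and u="\<lambda>N. N - 1", OF _ assms] by blast
qed

lemma prod_sum_identity:
  fixes x y :: "nat \<Rightarrow> complex"
  shows "(\<Sum>N=1..M. x N) * (\<Sum>N=1..M. y N) =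
    (\<Sum>N=1..M. x N * (\<Sum>i=1..N-1. y i) + y N * (\<Sum>i=1..N-1. x i) + x N * y N)"
proof (induction M)
  case 0 then show ?case by simp
next
  case (Suc M)
  have e: "{1..Suc M} = insert (Suc M) {1..M}" by auto
  show ?case unfolding e using Suc by (simp add: algebra_simps)
qed

lemma npow_add: "npow N (r1 + r2) = npow N r1 * npow N r2"
  unfolding npow_def by (simp add: distrib_right exp_add)

lemma npow_nz: "npow N r \<noteq> 0"
  unfolding npow_def by simp

lemma inspan_HH: "inspan (\<lambda>M. H \<alpha> M * H \<beta> M)"
proof (induction \<alpha> arbitrary: \<beta>)
  case Nil then show ?case by (simp add: inspan_H)
next
  case (Cons l1 \<alpha>')
  obtain r1 s1 where l1: "l1 = (r1, s1)" by force
  note IH = Cons.IH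
  show ?case
  proof (induction \<beta>)
    case Nil then show ?case using inspan_H[of "l1 # \<alpha>'"] by simp
  next
    case (Cons l2 \<beta>')
    obtain r2 s2 where l2: "l2 = (r2, s2)" by force
    have "inspan (\<lambda>M. (\<Sum>N\<in>{1..M}. s1 ^ N / npow N r1 * (\<lambda>M. H \<alpha>' M * H (l2 # \<beta>') M) (N - 1))
       + (\<Sum>N\<in>{1..M}. s2 ^ N / npow N r2 * (\<lambda>M. H (l1 # \<alpha>') M * H \<beta>' M) (N - 1))
       + (\<Sum>N\<in>{1..M}. (s1*s2) ^ N / npow N (r1+r2) * (\<lambda>M. H \<alpha>' M * H \<beta>' M) (N - 1)))"
      by (intro inspan_add inspan_shift IH Cons.IH)
    then show ?case
      apply (rule inspan_eq)
      apply (simp only: l1 l2 H.simps prod_sum_identity sum.distrib[symmetric])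
      apply (intro sum.cong refl)
      apply (simp add: npow_add power_mult_distrib)
      apply (simp add: field_simps npow_nz)
      done
  qed
qed

lemma inspan_multH: assumes "inspan g" shows "inspan (\<lambda>M. H \<alpha> M * g M)"
proof -
  have "inspan (\<lambda>M. \<Sum>N\<in>{M}. H \<alpha> N * H \<beta> N)" for \<beta>
    by (rule inspan_eq[OF inspan_HH[of \<alpha> \<beta>]]) simp
  then have "inspan (\<lambda>M. \<Sum>N\<in>{M}. H \<alpha> N * g N)"
    using inspan_lin[where A="\<lambda>M. {M}" and w="\<lambda>M N. H \<alpha> N" and u="\<lambda>N. N", OF _ assms] by blast
  then show ?thesis by (rule inspan_eq) simp
qed

lemma inspan_mult: assumes "inspan f" "inspan g" shows "inspan (\<lambda>M. f M * g M)"
proof -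
  have "inspan (\<lambda>M. \<Sum>N\<in>{M}. g N * H \<beta> N)" for \<beta>
    by (rule inspan_eq[OF inspan_multH[OF assms(2), of \<beta>]]) (simp add: mult.commute)
  then have "inspan (\<lambda>M. \<Sum>N\<in>{M}. g N * f N)"
    using inspan_lin[where A="\<lambda>M. {M}" and w="\<lambda>M N. g N" and u="\<lambda>N. N", OF _ assms(1)] by blast
  then show ?thesis by (rule inspan_eq) (simp add: mult.commute)
qed

lemma inspan_power: assumes "inspan f" shows "inspan (\<lambda>M. f M ^ e)"
proof (induction e)
  case 0 then show ?case by (simp add: inspan_const)
next
  case (Suc e) then show ?case using inspan_mult[OF assms Suc] by simp
qed

lemma inspan_prod: fixes m :: nat and \<alpha> :: "nat \<Rightarrow> word" shows "inspan (\<lambda>M. \<Prod>j<m. H (\<alpha> j) M ^ e j)"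
proof (induction m)
  case 0 then show ?case by (simp add: inspan_const)
next
  case (Suc m) then show ?case
    using inspan_mult[OF Suc inspan_power[OF inspan_H, of "\<alpha> m" "e m"]] by simp
qed

lemma H_step: "N \<ge> 1 \<Longrightarrow> H ((r,s)#\<alpha>) N = H ((r,s)#\<alpha>) (N - 1) + s ^ N / npow N r * H \<alpha> (N - 1)"
proof -
  assume "N \<ge> 1"
  then have e: "{1..N} = insert N {1..N-1}" by auto
  show ?thesis unfolding H.simps e by (subst sum.insert) (auto simp: add.commute)
qed

lemma npow_minus: "npow N (- q) = 1 / npow N q"
  unfolding npow_def by (simp add: exp_minus field_simps)

lemma npow_diff: "npow N (r - q) = npow N r / npow N q"
  unfolding npow_def by (simp add: exp_diff left_diff_distrib)

lemma inspan_weight: assumes "inspan f"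
  shows "inspan (\<lambda>M. \<Sum>N\<in>{1..M}. \<mu> ^ N * npow N q * f N)"
proof -
  have "inspan (\<lambda>M. \<Sum>N\<in>{1..M}. \<mu> ^ N * npow N q * H \<beta> N)" for \<beta>
  proof (cases \<beta>)
    case Nil
    show ?thesis by (rule inspan_eq[OF inspan_H[of "[(-q,\<mu>)]"]]) (simp add: Nil npow_minus)
  next
    case (Cons l \<alpha>)
    obtain r s where l: "l = (r,s)" by force
    have "inspan (\<lambda>M. H ((-q,\<mu>)#\<beta>) M + H ((r - q, \<mu> * s)#\<alpha>) M)"
      by (intro inspan_add inspan_H)
    then show ?thesis
      apply (rule inspan_eq)
      apply (simp only: Cons l H.simps(2)[of "-q" \<mu> "(r,s)#\<alpha>"] H.simps(2)[of "r-q" "\<mu>*s" \<alpha>] sum.distrib[symmetric])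
      apply (intro sum.cong refl)
      subgoal for M N
        apply (subst H_step[of N r s \<alpha>])
         apply simp
        apply (simp del: H.simps add: npow_minus npow_diff power_mult_distrib field_simps npow_nz)
        done
      done
  qed
  then show ?thesis
    using inspan_lin[where A="\<lambda>M. {1..M}" and w="\<lambda>M N. \<mu> ^ N * npow N q" and u="\<lambda>N. N", OF _ assms]
    by (simp add: mult.assoc)
qed


lemma dv: fixes a b x :: int shows "a dvd (x + (-b) mod a) \<longleftrightarrow> a dvd (x - b)"
  by (metis add_uminus_conv_diff dvd_eq_mod_eq_0 mod_add_right_eq)

lemma rootu: fixes A t :: nat assumes "A > 0" "cis (2*pi/real A) ^ t = 1" shows "A dvd t"
proof -
  define \<omega> where "\<omega> = cis (2*pi/real A)"
  have wA: "\<omega> ^ A = 1" using assms(1) by (simp add: \<omega>_def DeMoivre)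
  have "\<omega> ^ t = \<omega> ^ (A * (t div A) + t mod A)" by simp
  also have "\<dots> = (\<omega> ^ A) ^ (t div A) * \<omega> ^ (t mod A)"
    by (simp only: power_add power_mult)
  finally have "\<omega> ^ t = (\<omega> ^ A) ^ (t div A) * \<omega> ^ (t mod A)" .
  then have "\<omega> ^ (t mod A) = 1" using assms(2) wA \<omega>_def by simp
  then have "cis (2 * pi * real (t mod A) / real A) = cis (2 * pi * real 0 / real A)"
    by (simp add: \<omega>_def DeMoivre mult_ac)
  moreover have "inj_on (\<lambda>k. cis (2 * pi * real k / real A)) {..<A}"
    using bij_betw_roots_unity[OF assms(1)] bij_betw_imp_inj_on by blast
  ultimately have "t mod A = 0" using assms(1) inj_onD by fastforce
  then show ?thesis by auto
qed

lemma ex_root: fixes z :: complex assumes "z \<noteq> 0" "A > 0" shows "\<exists>w. w ^ A = z"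
proof -
  have "card {w::complex. w ^ A = z} = A" by (rule card_nth_roots[OF assms])
  then have "{w::complex. w ^ A = z} \<noteq> {}" using assms(2) by (metis card.empty less_irrefl)
  then show ?thesis by auto
qed

lemma sum_split: "(\<Sum>N=1..m+A. f N) = (\<Sum>N=1..m. f N) + (\<Sum>i=1..A. f (m+i::nat))"
proof (induction A)
  case 0 then show ?case by simp
next
  case (Suc A)
  have e1: "{1..m + Suc A} = insert (m + Suc A) {1..m+A}" by auto
  have e2: "{1..Suc A} = insert (Suc A) {1..A}" by auto
  show ?case unfolding e1 e2 using Suc by (simp add: add_ac)
qed

theorem theorem3p3:
  fixes a b :: int and z q :: complex and m :: nat
    and \<alpha> :: "nat \<Rightarrow> word" and e :: "nat \<Rightarrow> nat"
  assumes "a > 0" and "a + b \<ge> 1"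
  shows "\<exists>cs :: (complex \<times> word) list. \<forall>k::nat. k \<ge> 1 \<longrightarrow>
           (\<Sum>n=1..k. z ^ n * npow (nat (a * int n + b)) q *
              (\<Prod>j<m. H (\<alpha> j) (nat (a * int n + b)) ^ e j))
           = (\<Sum>(c, \<beta>)\<leftarrow>cs. c * H \<beta> (nat (a * int k + b)))"
proof (cases "z = 0")
  case True
  show ?thesis by (rule exI[of _ "[]"]) (auto simp: True intro!: sum.neutral)
next
  case False
  define A where "A = nat a"
  have A0: "A > 0" and Aa: "int A = a" using assms(1) by (auto simp: A_def)
  obtain w where w: "w ^ A = z" using ex_root[OF False A0] by blast
  have w0: "w \<noteq> 0" using w False A0 by auto
  define \<omega> where "\<omega> = cis (2*pi/real A)"
  have \<omega>A: "\<omega> ^ A = 1" using A0 by (simp add: \<omega>_def DeMoivre)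
  define c where "c = nat ((-b) mod a)"
  have ci: "int c = (-b) mod a" using assms(1) by (simp add: c_def)
  define g where "g N = npow N q * (\<Prod>j<m. H (\<alpha> j) N ^ e j)" for N
  define \<mu> where "\<mu> j = w * \<omega> ^ j" for j :: nat
  define lam where "lam j = w powi (-b) * (\<omega> ^ c) ^ j / of_nat A" for j :: nat
  define T where "T N = (\<Sum>j<A. lam j * \<mu> j ^ N)" for N
  have T_eq: "T N = w powi (-b) * w ^ N / of_nat A * (\<Sum>j<A. (\<omega> ^ (N + c)) ^ j)" for N
    unfolding T_def sum_distrib_left
  proof (intro sum.cong refl)
    fix j
    have "(\<omega> ^ c) ^ j * (\<omega> ^ j) ^ N = (\<omega> ^ (N + c)) ^ j"
      by (simp add: power_mult[symmetric] power_add[symmetric] algebra_simps)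
    then show "lam j * \<mu> j ^ N = w powi (-b) * w ^ N / of_nat A * (\<omega> ^ (N + c)) ^ j"
      unfolding lam_def \<mu>_def by (simp add: power_mult_distrib field_simps)
  qed
  have T_val: "T N = (if a dvd (int N - b) then z powi ((int N - b) div a) else 0)" for N
  proof (cases "a dvd (int N - b)")
    case True
    then have "int A dvd int (N + c)" using dv[of a "int N" b] by (simp add: Aa ci)
    then have "A dvd (N + c)" by (simp only: int_dvd_int_iff)
    then obtain d where d: "N + c = A * d" by blast
    have "\<omega> ^ (N + c) = 1" by (simp add: d power_mult \<omega>A)
    then have "T N = w powi (-b) * w ^ N" using A0 by (simp add: T_eq)
    also have "\<dots> = w powi (int N - b)"
      using power_int_add[of w "int N" "-b"] w0 by (simp add: mult.commute)
    also obtain d' where d': "int N - b = a * d'" using True by blast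
    then have "w powi (int N - b) = z powi ((int N - b) div a)"
      using assms(1) by (simp add: power_int_mult Aa[symmetric] w[symmetric] power_int_of_nat)
    finally show ?thesis using True by simp
  next
    case False
    then have "\<not> int A dvd int (N + c)" using dv[of a "int N" b] by (simp add: Aa ci)
    then have "\<not> A dvd (N + c)" using int_dvd_int_iff by blast
    then have ne: "\<omega> ^ (N + c) \<noteq> 1" using rootu[OF A0, of "N + c"] by (auto simp: \<omega>_def)
    have "(\<omega> ^ (N + c)) ^ A = 1" by (simp add: power_mult[symmetric] mult.commute[of _ A] power_mult \<omega>A)
    then have "(\<Sum>j<A. (\<omega> ^ (N + c)) ^ j) = 0" using ne by (simp add: sum_gp_strict)
    then show ?thesis using False by (simp add: T_eq)
  qed
  define G where "G j M = (\<Sum>N=1..M. \<mu> j ^ N * g N)" for j M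
  have G_in: "inspan (G j)" for j
    using inspan_weight[OF inspan_prod[where m=m and \<alpha>=\<alpha> and e=e], of "\<mu> j" q]
    unfolding G_def g_def by (simp add: mult.assoc)
  define R where "R M = (\<Sum>j<A. lam j * G j M)" for M
  have R_in: "inspan R"
    unfolding R_def by (intro inspan_sum inspan_scale G_in)
  define S where "S k = (\<Sum>n=1..k. z ^ n * npow (nat (a * int n + b)) q *
              (\<Prod>j<m. H (\<alpha> j) (nat (a * int n + b)) ^ e j))" for k
  have S_suc: "S (Suc k) = S k + z ^ Suc k * g (nat (a * int (Suc k) + b))" for k
    unfolding S_def g_def by (subst sum.cl_ivl_Suc) (simp add: mult.assoc)
  have R_step: "R (nat (a * int (Suc k) + b)) = R (nat (a * int k + b)) + z ^ Suc k * g (nat (a * int (Suc k) + b))"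
    if k1: "k \<ge> 1" for k
  proof -
    define mm where "mm = nat (a * int k + b)"
    have "a * int k \<ge> a * 1" using k1 assms(1) by (intro mult_left_mono) auto
    then have "a * int k + b \<ge> 0" using assms(2) by linarith
    then have mmi: "int mm = a * int k + b" by (simp add: mm_def)
    have e1: "nat (a * int (Suc k) + b) = mm + A"
      using mmi Aa by (simp add: algebra_simps)
    have "R (mm + A) = R mm + (\<Sum>j<A. \<Sum>i=1..A. lam j * \<mu> j ^ (mm + i) * g (mm + i))"
      unfolding R_def G_def sum_split by (simp add: distrib_left sum.distrib sum_distrib_left mult.assoc)
    also have "(\<Sum>j<A. \<Sum>i=1..A. lam j * \<mu> j ^ (mm + i) * g (mm + i)) = (\<Sum>i=1..A. \<Sum>j<A. lam j * \<mu> j ^ (mm + i) * g (mm + i))"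
      by (rule sum.swap)
    also have "\<dots> = (\<Sum>i=1..A. T (mm + i) * g (mm + i))"
      unfolding T_def by (simp add: sum_distrib_right)
    also have "(\<Sum>i=1..A. T (mm + i) * g (mm + i)) = z ^ Suc k * g (mm + A)"
    proof -
      have ins: "{1..A} = insert A {1..A-1}" using A0 by auto
      have z0: "T (mm + i) = 0" if "i \<in> {1..A-1}" for i
      proof -
        have h: "int (mm + i) - b = a * int k + int i" using mmi by simp
        have nd: "\<not> a dvd (a * int k + int i)"
        proof
          assume "a dvd (a * int k + int i)"
          then have "a dvd int i" by (simp add: dvd_add_right_iff)
          then have "int A dvd int i" using Aa by simp
          then have "A dvd i" by (simp add: int_dvd_int_iff)
          then show False using that by (auto dest: dvd_imp_le)
        qed
        have "T (mm + i) = (if a dvd (a * int k + int i) then z powi ((a * int k + int i) div a) else 0)"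
          using T_val[of "mm + i"] unfolding h .
        then show ?thesis using nd by simp
      qed
      have tA: "T (mm + A) = z ^ Suc k"
      proof -
        have h: "int (mm + A) - b = a * (int k + 1)" using mmi Aa by (simp add: algebra_simps)
        have "T (mm + A) = (if a dvd (a * (int k + 1)) then z powi ((a * (int k + 1)) div a) else 0)"
          using T_val[of "mm + A"] unfolding h .
        also have "\<dots> = z powi (int (Suc k))" using assms(1) by (simp add: add.commute)
        finally show ?thesis by (simp only: power_int_of_nat)
      qed
      have s0: "(\<Sum>i\<in>{1..A-1}. T (mm + i) * g (mm + i)) = 0" using z0 by (intro sum.neutral) auto
      show ?thesis unfolding ins using tA s0 A0 by (subst sum.insert) auto
    qed
    finally show ?thesis unfolding e1 mm_def by simp
  qed
  define D where "D = S 1 - R (nat (a * int 1 + b))"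
  have key: "S k = R (nat (a * int k + b)) + D" if "k \<ge> 1" for k
    using that
  proof (induction k rule: dec_induct)
    case base then show ?case by (simp add: D_def)
  next
    case (step k)
    have "S (Suc k) = S k + z ^ Suc k * g (nat (a * int (Suc k) + b))" by (rule S_suc)
    also have "\<dots> = R (nat (a * int (Suc k) + b)) + D"
      using step R_step[of k] by (simp only:) (simp add: algebra_simps)
    finally show ?case .
  qed
  have "inspan (\<lambda>M. R M + D)" by (intro inspan_add R_in inspan_const)
  then obtain cs where cs: "\<forall>M. R M + D = (\<Sum>(c, \<beta>)\<leftarrow>cs. c * H \<beta> M)" unfolding inspan_def by blast
  show ?thesis
  proof (rule exI[of _ cs], intro allI impI)
    fix k :: nat assume "k \<ge> 1"
    then show "(\<Sum>n=1..k. z ^ n * npow (nat (a * int n + b)) q *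
              (\<Prod>j<m. H (\<alpha> j) (nat (a * int n + b)) ^ e j))
           = (\<Sum>(c, \<beta>)\<leftarrow>cs. c * H \<beta> (nat (a * int k + b)))"
      using key[of k] cs by (simp add: S_def)
  qed
qed

end
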